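(* Let $\mathcal{F}(\mathsf{REG},\mathsf{REG})$ be the class of all languages $L(\Phi)$ generated by F-systems $\Phi=(L_1,L_2)$ in which both the core language $L_1$ and the folding procedure language $L_2$ are regular. Then every language in $\mathcal{F}(\mathsf{REG},\mathsf{REG})$ is a linear (context-free) language, i.e., $\mathcal{F}(\mathsf{REG},\mathsf{REG})\subseteq \mathsf{LIN}$.
   Context: Let $\Sigma$ be a finite alphabet and $\Gamma=\{\mathtt{u},\mathtt{d}\}$. Define $f:\Sigma^*\times\Sigma\times\Gamma\to\Sigma^*$ by $f(x,a,\mathtt{u})=ax$ and $f(x,a,\mathtt{d})=xa$. The folding function $h:\Sigma^*\times\Gamma^*\to\Sigma^*$ is the partial function with $h(\varepsilon,\varepsilon)=\varepsilon$; if $|w|=|v|>0$ with $w=w'a$ ($a\in\Sigma$) and $v=v'b$ ($b\in\Gamma$), then $h(w,v)=f(h(w',v'),a,b)$; and $h(w,v)$ is undefined if $|w|\neq|v|$. An F-system is a pair $\Phi=(L_1,L_2)$ with $L_1\subseteq\Sigma^*$ and $L_2\subseteq\Gamma^*$; its language is $L(\Phi)=\{h(w,v)\mid w\in L_1, v\in L_2, |w|=|v|\}$. A linear grammar is a context-free grammar all of whose rules have the form $A\to uBv$ or $A\to u$ with $u,v$ terminal words and $A,B$ nonterminals; $\mathsf{LIN}$ is the class of languages generated by linear grammars, and $\mathsf{REG}$ the class of regular languages. *)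

theory Defs
  imports Main
begin

datatype gamma = U | D

fun fstep :: "'a list \<Rightarrow> 'a \<Rightarrow> gamma \<Rightarrow> 'a list" where
  "fstep x a U = a # x"
| "fstep x a D = x @ [a]"

fun hfold :: "'a list \<Rightarrow> gamma list \<Rightarrow> 'a list option" where
  "hfold w v = (if length w = length v
                then Some (foldl (\<lambda>x (a, b). fstep x a b) [] (zip w v))
                else None)"

definition F_lang :: "'a list set \<Rightarrow> gamma list set \<Rightarrow> 'a list set" where
  "F_lang L1 L2 = {the (hfold w v) | w v. w \<in> L1 \<and> v \<in> L2 \<and> length w = length v}"

definition regular :: "'a list set \<Rightarrow> bool" where
  "regular L \<longleftrightarrow> (\<exists>(Q :: nat set) (\<delta> :: nat \<Rightarrow> 'a \<Rightarrow> nat) q0 F.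
      finite Q \<and> q0 \<in> Q \<and> F \<subseteq> Q \<and> (\<forall>q\<in>Q. \<forall>a. \<delta> q a \<in> Q) \<and>
      L = {w. foldl \<delta> q0 w \<in> F})"

text \<open>Linear grammar rules over nonterminals nat:
  A -> u (TermRule A u) and A -> u B v (LinRule A u B v).\<close>
datatype 'a lrule = TermRule nat "'a list" | LinRule nat "'a list" nat "'a list"

inductive lin_derives :: "'a lrule set \<Rightarrow> nat \<Rightarrow> 'a list \<Rightarrow> bool" for R where
  trm: "TermRule A u \<in> R \<Longrightarrow> lin_derives R A u"
| lnr: "LinRule A u B v \<in> R \<Longrightarrow> lin_derives R B w \<Longrightarrow> lin_derives R A (u @ w @ v)"

definition linear_lang :: "'a list set \<Rightarrow> bool" where
  "linear_lang L \<longleftrightarrow> (\<exists>(R :: 'a lrule set) S. finite R \<and> L = {w. lin_derives R S w})"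

end

theory Submission
  imports Defs "HOL-Library.Nat_Bijection"
begin

definition NT :: "nat \<Rightarrow> nat \<Rightarrow> nat" where
  "NT p q = Suc (prod_encode (p, q))"

lemma NT_inj[simp]: "NT p q = NT p' q' \<longleftrightarrow> p = p' \<and> q = q'"
  by (simp add: NT_def prod_encode_eq)

lemma NT_nz[simp]: "NT p q \<noteq> 0" "0 \<noteq> NT p q"
  by (simp_all add: NT_def)

lemma foldl_in: "q0 \<in> Q \<Longrightarrow> (\<forall>q\<in>Q. \<forall>a. \<delta> q a \<in> Q) \<Longrightarrow> foldl \<delta> q0 w \<in> Q"
  by (induction w arbitrary: q0) auto

abbreviation fl :: "'a list \<Rightarrow> gamma list \<Rightarrow> 'a list" where
  "fl w v \<equiv> foldl (\<lambda>x (a, b). fstep x a b) [] (zip w v)"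

theorem theorem1:
  fixes L1 :: "('a::finite) list set" and L2 :: "gamma list set"
  assumes "regular L1" and "regular L2"
  shows "linear_lang (F_lang L1 L2)"
proof -
  obtain Q1 and d1 :: "nat \<Rightarrow> 'a \<Rightarrow> nat" and s1 F1 where
    A1: "finite Q1" "s1 \<in> Q1" "F1 \<subseteq> Q1" "\<forall>q\<in>Q1. \<forall>a. d1 q a \<in> Q1"
      "L1 = {w. foldl d1 s1 w \<in> F1}"
    using assms(1) unfolding regular_def by blast
  obtain Q2 and d2 :: "nat \<Rightarrow> gamma \<Rightarrow> nat" and s2 F2 where
    A2: "finite Q2" "s2 \<in> Q2" "F2 \<subseteq> Q2" "\<forall>q\<in>Q2. \<forall>a. d2 q a \<in> Q2"
      "L2 = {w. foldl d2 s2 w \<in> F2}"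
    using assms(2) unfolding regular_def by blast
  define R :: "'a lrule set" where "R =
    {TermRule (NT s1 s2) []} \<union> (\<lambda>(p,q). LinRule 0 [] (NT p q) []) ` (F1 \<times> F2)
    \<union> (\<lambda>(p,q,a). LinRule (NT (d1 p a) (d2 q U)) [a] (NT p q) []) ` (Q1 \<times> Q2 \<times> UNIV)
    \<union> (\<lambda>(p,q,a). LinRule (NT (d1 p a) (d2 q D)) [] (NT p q) [a]) ` (Q1 \<times> Q2 \<times> UNIV)"
  have finR: "finite R"
    using A1 A2 unfolding R_def by (auto intro!: finite_imageI finite_cartesian_product dest: finite_subset)
  have LA: "length w = length v \<Longrightarrow>
      lin_derives R (NT (foldl d1 s1 w) (foldl d2 s2 v)) (fl w v)" for w v
  proof (induction w arbitrary: v rule: rev_induct)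
    case Nil
    then show ?case by (auto simp: R_def intro: lin_derives.trm)
  next
    case (snoc a w v0)
    then obtain v b where v0: "v0 = v @ [b]" and len: "length w = length v"
      by (cases v0 rule: rev_cases) auto
    have IH: "lin_derives R (NT (foldl d1 s1 w) (foldl d2 s2 v)) (fl w v)"
      using snoc.IH len by blast
    have i1: "foldl d1 s1 w \<in> Q1" using foldl_in A1 by metis
    have i2: "foldl d2 s2 v \<in> Q2" using foldl_in A2 by metis
    show ?case
    proof (cases b)
      case U
      have "LinRule (NT (d1 (foldl d1 s1 w) a) (d2 (foldl d2 s2 v) U)) [a]
              (NT (foldl d1 s1 w) (foldl d2 s2 v)) [] \<in> R"
        unfolding R_def using i1 i2 by (simp add: image_iff Bex_def)
      from lin_derives.lnr[OF this IH] show ?thesis using U v0 len by simp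
    next
      case D
      have "LinRule (NT (d1 (foldl d1 s1 w) a) (d2 (foldl d2 s2 v) D)) []
              (NT (foldl d1 s1 w) (foldl d2 s2 v)) [a] \<in> R"
        unfolding R_def using i1 i2 by (simp add: image_iff Bex_def)
      from lin_derives.lnr[OF this IH] show ?thesis using D v0 len by simp
    qed
  qed
  have LB: "lin_derives R X s \<Longrightarrow>
      (X = 0 \<longrightarrow> s \<in> F_lang L1 L2) \<and>
      (\<forall>p q. X = NT p q \<longrightarrow> (\<exists>w v. length w = length v \<and> foldl d1 s1 w = p
          \<and> foldl d2 s2 v = q \<and> s = fl w v))" for X s
  proof (induction rule: lin_derives.induct)
    case (trm A u)
    then show ?case unfolding R_def
      by (auto intro!: exI[of _ "[]"])
  next
    case (lnr A u B v w)
    from lnr.hyps(1) consider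
      (S) p q where "A = 0" "u = []" "B = NT p q" "v = []" "p \<in> F1" "q \<in> F2"
    | (Up) p q a where "A = NT (d1 p a) (d2 q U)" "u = [a]" "B = NT p q" "v = []"
    | (Dn) p q a where "A = NT (d1 p a) (d2 q D)" "u = []" "B = NT p q" "v = [a]"
      unfolding R_def by auto
    then show ?case
    proof cases
      case S
      then obtain w1 v1 where h: "length w1 = length v1" "foldl d1 s1 w1 = p"
          "foldl d2 s2 v1 = q" "w = fl w1 v1" using lnr.IH by blast
      have "u @ w @ v = the (hfold w1 v1)" using h S by simp
      then show ?thesis unfolding F_lang_def using S h A1 A2 by auto
    next
      case Up
      then obtain w1 v1 where h: "length w1 = length v1" "foldl d1 s1 w1 = p"
          "foldl d2 s2 v1 = q" "w = fl w1 v1" using lnr.IH by blast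
      show ?thesis using Up h
        by (auto intro!: exI[of _ "w1 @ [a]"] exI[of _ "v1 @ [U]"])
    next
      case Dn
      then obtain w1 v1 where h: "length w1 = length v1" "foldl d1 s1 w1 = p"
          "foldl d2 s2 v1 = q" "w = fl w1 v1" using lnr.IH by blast
      show ?thesis using Dn h
        by (auto intro!: exI[of _ "w1 @ [a]"] exI[of _ "v1 @ [D]"])
    qed
  qed
  have "F_lang L1 L2 = {s. lin_derives R 0 s}"
  proof (intro set_eqI iffI)
    fix s assume "s \<in> F_lang L1 L2"
    then obtain w v where h: "w \<in> L1" "v \<in> L2" "length w = length v" "s = fl w v"
      unfolding F_lang_def by auto
    have r: "LinRule 0 [] (NT (foldl d1 s1 w) (foldl d2 s2 v)) [] \<in> R"
      unfolding R_def using h A1 A2 by (simp add: image_iff Bex_def)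
    from lin_derives.lnr[OF r LA[OF h(3)]] show "s \<in> {s. lin_derives R 0 s}"
      using h by simp
  next
    fix s assume "s \<in> {s. lin_derives R 0 s}"
    then show "s \<in> F_lang L1 L2" using LB by blast
  qed
  then show ?thesis unfolding linear_lang_def using finR by blast
qed

end
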